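(* For any $\theta=(B,\Omega)$ and $\psi_i=(m_i,s_i)$, with $\Sigma=\Omega^{-1}$, $\big[\nabla_{\mathrm{vec}(B)\mathrm{vec}(B)}J_i-\nabla_{\mathrm{vec}(B)\psi_i}J_i(\nabla_{\psi_i\psi_i}J_i)^{-1}\nabla_{\psi_i\mathrm{vec}(B)}J_i\big](\theta,\psi_i)=-\Big(\Sigma+D_{\tilde a_i}^{-1}+D_{s_i}^4\big(I_p+D_{s_i}^2(D_{\tilde a_i}+\Omega_D)\big)^{-1}\Big)^{-1}\otimes(x_ix_i^\top)$.
   Context: PLN model, observation $i$ with counts $Y_i\in\mathbb N^p$, covariate $x_i\in\mathbb R^m$, offset $o_i\in\mathbb R^p$; $B\in\mathcal M_{m,p}(\mathbb R)$ (columns $B_j$), $\Omega$ symmetric positive definite. Variational parameter $\psi_i=(m_i,s_i)\in\mathbb R^p\times(0,\infty)^p$. Single-observation ELBO: $J_i(\theta,\psi_i)=Y_i^\top(o_i+m_i+B^\top x_i)-\tilde a_i^\top1_p-\sum_j\log(Y_{ij}!)+\frac12\log|\Omega|-\frac12m_i^\top\Omega m_i-\frac12\mathrm{diag}(\Omega)^\top s_i^2+\sum_j\log s_{ij}+\frac p2$, $\tilde a_{ij}=\exp(o_{ij}+x_i^\top B_j+m_{ij}+s_{ij}^2/2)$. $\mathrm{vec}(B)$ stacks the columns of $B$. Notation: $D_v=\mathrm{Diag}(v)$, $\Omega_D=I_p\odot\Omega$ (diagonal part of $\Omega$), $\otimes$ Kronecker product. *)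

theory Defs
  imports "HOL-Analysis.Analysis"
begin

definition Diag :: "real^'n \<Rightarrow> real^'n^'n" where
  "Diag v = (\<chi> i j. if i = j then v $ i else 0)"

definition diag_part :: "real^'n^'n \<Rightarrow> real^'n^'n" where
  "diag_part A = (\<chi> i j. if i = j then A $ i $ j else 0)"

text \<open>Kronecker product A (x) C, rows/columns indexed by pairs (j,k), j the outer (block) index.
  With vec(B) indexed by (j,k) ~ B_{kj} (columns stacked), this is the usual Kronecker product.\<close>
definition kron :: "real^'a^'a \<Rightarrow> real^'b^'b \<Rightarrow> real^('a \<times> 'b)^('a \<times> 'b)" where
  "kron A C = (\<chi> u v. A $ fst u $ fst v * C $ snd u $ snd v)"

definition partial :: "(real^'n \<Rightarrow> real) \<Rightarrow> 'n \<Rightarrow> real^'n \<Rightarrow> real" where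
  "partial f i x = deriv (\<lambda>t. f (x + t *\<^sub>R axis i 1)) 0"

definition hessian :: "(real^'n \<Rightarrow> real) \<Rightarrow> real^'n \<Rightarrow> real^'n^'n" where
  "hessian f x = (\<chi> i j. partial (partial f j) i x)"

definition atil :: "real^'m \<Rightarrow> real^'p \<Rightarrow> real^'p^'m \<Rightarrow> real^'p \<Rightarrow> real^'p \<Rightarrow> real^'p" where
  "atil x off B mu s = (\<chi> j. exp (off $ j + (\<Sum>k\<in>UNIV. x $ k * B $ k $ j) + mu $ j + (s $ j)^2 / 2))"

definition elbo :: "nat^'p \<Rightarrow> real^'m \<Rightarrow> real^'p \<Rightarrow> real^'p^'m \<Rightarrow> real^'p^'p \<Rightarrow> real^'p \<Rightarrow> real^'p \<Rightarrow> real" where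
  "elbo Y x off B Om mu s =
     (\<Sum>j\<in>UNIV. real (Y $ j) * (off $ j + mu $ j + (\<Sum>k\<in>UNIV. x $ k * B $ k $ j)))
     - (\<Sum>j\<in>UNIV. atil x off B mu s $ j)
     - (\<Sum>j\<in>UNIV. ln (fact (Y $ j)))
     + ln (det Om) / 2
     - (mu \<bullet> (Om *v mu)) / 2
     - (\<Sum>j\<in>UNIV. Om $ j $ j * (s $ j)^2) / 2
     + (\<Sum>j\<in>UNIV. ln (s $ j))
     + real CARD('p) / 2"

text \<open>Joint variable z = (vec(B), (m_i, s_i)): z $ Inl (j,k) = B_{kj},
  z $ Inr (Inl j) = m_ij, z $ Inr (Inr j) = s_ij.\<close>
definition unB :: "real^(('p::finite \<times> 'm::finite) + ('p + 'p)) \<Rightarrow> real^'p^'m" where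
  "unB z = (\<chi> k j. z $ Inl (j, k))"
definition unM :: "real^(('p::finite \<times> 'm::finite) + ('p + 'p)) \<Rightarrow> real^'p" where
  "unM z = (\<chi> j. z $ Inr (Inl j))"
definition unS :: "real^(('p::finite \<times> 'm::finite) + ('p + 'p)) \<Rightarrow> real^'p" where
  "unS z = (\<chi> j. z $ Inr (Inr j))"

definition joint :: "real^'p::finite^'m::finite \<Rightarrow> real^'p \<Rightarrow> real^'p \<Rightarrow> real^(('p \<times> 'm) + ('p + 'p))" where
  "joint B mu s = (\<chi> a. case a of Inl (j, k) \<Rightarrow> B $ k $ j
                               | Inr (Inl j) \<Rightarrow> mu $ j | Inr (Inr j) \<Rightarrow> s $ j)"

definition elbo_joint :: "nat^'p::finite \<Rightarrow> real^'m \<Rightarrow> real^'p \<Rightarrow> real^'p^'p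
                          \<Rightarrow> real^(('p \<times> 'm) + ('p + 'p)) \<Rightarrow> real" where
  "elbo_joint Y x off Om z = elbo Y x off (unB z) Om (unM z) (unS z)"

definition hBB :: "real^('a::finite + 'b::finite)^('a + 'b) \<Rightarrow> real^'a^'a" where
  "hBB H = (\<chi> u v. H $ Inl u $ Inl v)"
definition hBP :: "real^('a::finite + 'b::finite)^('a + 'b) \<Rightarrow> real^'b^'a" where
  "hBP H = (\<chi> u v. H $ Inl u $ Inr v)"
definition hPB :: "real^('a::finite + 'b::finite)^('a + 'b) \<Rightarrow> real^'a^'b" where
  "hPB H = (\<chi> u v. H $ Inr u $ Inl v)"
definition hPP :: "real^('a::finite + 'b::finite)^('a + 'b) \<Rightarrow> real^'b^'b" where
  "hPP H = (\<chi> u v. H $ Inr u $ Inr v)"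

end

theory Submission
  imports Defs
begin


lemma unB_add_scale: "unB (z + t *\<^sub>R d) = unB z + t *\<^sub>R unB d"
  by (simp add: unB_def vec_eq_iff)
lemma unM_add_scale: "unM (z + t *\<^sub>R d) = unM z + t *\<^sub>R unM d"
  by (simp add: unM_def vec_eq_iff)
lemma unS_add_scale: "unS (z + t *\<^sub>R d) = unS z + t *\<^sub>R unS d"
  by (simp add: unS_def vec_eq_iff)

lemma quad_expand: fixes Om :: "real^'p^'p"
  shows "(m + t *\<^sub>R m') \<bullet> (Om *v (m + t *\<^sub>R m')) = m \<bullet> (Om *v m) + t * (m' \<bullet> (Om *v m) + m \<bullet> (Om *v m')) + t^2 * (m' \<bullet> (Om *v m'))"
  by (simp add: matrix_vector_right_distrib inner_add_left inner_add_right algebra_simps power2_eq_square)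

definition D1 :: "nat^'p::finite \<Rightarrow> real^'m::finite \<Rightarrow> real^'p \<Rightarrow> real^'p^'p \<Rightarrow> real^(('p \<times> 'm) + ('p + 'p)) \<Rightarrow> real^(('p \<times> 'm) + ('p + 'p)) \<Rightarrow> real" where
 "D1 Y x off Om z d = (\<Sum>j\<in>UNIV. (unM d$j + (\<Sum>k\<in>UNIV. unB d$k$j * x$k)) * real(Y$j))
   - (\<Sum>j\<in>UNIV. atil x off (unB z) (unM z) (unS z) $ j * ((\<Sum>k\<in>UNIV. unB d$k$j*x$k) + unM d$j + unS d$j * unS z$j))
   - (unM d \<bullet> (Om *v unM z) + unM z \<bullet> (Om *v unM d))/2 - (\<Sum>j\<in>UNIV. unS d$j * unS z$j * Om$j$j) + (\<Sum>j\<in>UNIV. unS d$j / unS z$j)"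

definition D2 :: "real^'m::finite \<Rightarrow> real^'p::finite \<Rightarrow> real^'p^'p \<Rightarrow> real^(('p \<times> 'm) + ('p + 'p)) \<Rightarrow> real^(('p \<times> 'm) + ('p + 'p)) \<Rightarrow> real^(('p \<times> 'm) + ('p + 'p)) \<Rightarrow> real" where
 "D2 x off Om z d' d =
   - (\<Sum>j\<in>UNIV. atil x off (unB z) (unM z) (unS z) $ j * ((\<Sum>k\<in>UNIV. unB d'$k$j*x$k) + unM d'$j + unS d'$j * unS z$j) * ((\<Sum>k\<in>UNIV. unB d$k$j*x$k) + unM d$j + unS d$j * unS z$j))
   - (\<Sum>j\<in>UNIV. atil x off (unB z) (unM z) (unS z) $ j * unS d$j * unS d'$j)
   - (unM d \<bullet> (Om *v unM d') + unM d' \<bullet> (Om *v unM d))/2 - (\<Sum>j\<in>UNIV. unS d$j * unS d'$j * Om$j$j)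
   - (\<Sum>j\<in>UNIV. unS d$j * unS d'$j / (unS z$j)^2)"

lemma D1_deriv:
  assumes "\<And>j. unS z $ j > (0::real)"
  shows "((\<lambda>t. elbo_joint Y x off Om (z + t *\<^sub>R d)) has_real_derivative D1 Y x off Om z d) (at 0)"
  unfolding elbo_joint_def elbo_def atil_def unB_add_scale unM_add_scale unS_add_scale quad_expand
  apply (simp only: vector_add_component vector_scaleR_component)
  apply (rule derivative_eq_intros refl | simp add: assms)+
  apply (simp add: D1_def atil_def sum_divide_distrib[symmetric] sum_distrib_left mult.commute)
  apply (simp add: mult.left_commute[of _ 2] sum_distrib_left[symmetric])
  done

lemma D2_deriv:
  assumes "\<And>j. unS z $ j > (0::real)"
  shows "((\<lambda>t. D1 Y x off Om (z + t *\<^sub>R d') d) has_real_derivative D2 x off Om z d' d) (at 0)"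
proof -
  have nz: "\<And>j. unS z $ j \<noteq> 0" using assms by (metis less_irrefl)
  show ?thesis
  unfolding D1_def atil_def unB_add_scale unM_add_scale unS_add_scale matrix_vector_right_distrib inner_add_left inner_add_right matrix_vector_mult_scaleR inner_scaleR_right inner_scaleR_left
  apply (simp only: vector_add_component vector_scaleR_component real_scaleR_def)
  apply (rule derivative_eq_intros refl | simp add: assms nz)+
  apply (simp add: D2_def atil_def sum.distrib sum_negf power2_eq_square)
  apply (simp add: mult_ac)
  done
qed


lemma inv_unique:
  fixes A X :: "real^'n^'n"
  assumes "A ** X = mat 1"
  shows "matrix_inv A = X"
proof -
  have XA: "X ** A = mat 1" using assms matrix_left_right_inverse by blast
  have "A ** matrix_inv A = mat 1 \<and> matrix_inv A ** A = mat 1"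
    unfolding matrix_inv_def by (rule someI[of _ X]) (use assms XA in simp)
  then have "matrix_inv A ** A = mat 1" by simp
  then have "matrix_inv A = matrix_inv A ** (A ** X)" using assms by simp
  also have "\<dots> = X" by (simp add: matrix_mul_assoc \<open>matrix_inv A ** A = mat 1\<close>)
  finally show ?thesis .
qed

lemma mm_neg_left: fixes A :: "real^'n^'m" and B :: "real^'k^'n"
  shows "(- A) ** B = - (A ** B)"
  by (simp add: vec_eq_iff matrix_matrix_mult_def sum_negf)
lemma mm_neg_right: fixes A :: "real^'n^'m" and B :: "real^'k^'n"
  shows "A ** (- B) = - (A ** B)"
  by (simp add: vec_eq_iff matrix_matrix_mult_def sum_negf)
lemma mm_zero_left: fixes B :: "real^'k^'n" shows "(0::real^'n^'m) ** B = 0"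
  by (simp add: vec_eq_iff matrix_matrix_mult_def)
lemma mm_zero_right: fixes A :: "real^'n^'m" shows "A ** (0::real^'k^'n) = 0"
  by (simp add: vec_eq_iff matrix_matrix_mult_def)

lemma mm_add_rdistrib: fixes A B :: "real^'n^'m" and C :: "real^'k^'n"
  shows "(A + B) ** C = A ** C + B ** C"
  by (simp add: vec_eq_iff matrix_matrix_mult_def sum.distrib distrib_right)

lemma woodbury:
  fixes Da Dai :: "real^'p^'p" and U :: "real^'q^'p" and C Ci Pi :: "real^'q^'q"
  assumes h1: "Dai ** Da = mat 1" and h2: "Ci ** C = mat 1"
    and h3: "(C + transpose U ** Da ** U) ** Pi = - mat 1"
  shows "(Dai + U ** Ci ** transpose U) ** (Da + Da ** U ** Pi ** transpose U ** Da) = mat 1"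
proof -
  let ?T = "transpose U"
  have h2': "\<And>X::real^'q^'p. X ** Ci ** C = X"
    by (metis h2 matrix_mul_assoc matrix_mul_rid)
  have z: "U ** Ci ** ((C + ?T ** Da ** U) ** Pi + mat 1) ** ?T ** Da = 0"
    by (simp add: h3 mm_zero_left mm_zero_right)
  have e: "U ** Ci ** ((C + ?T ** Da ** U) ** Pi + mat 1) ** ?T ** Da
      = U ** Pi ** ?T ** Da + U ** Ci ** ?T ** Da + U ** Ci ** ?T ** Da ** U ** Pi ** ?T ** Da"
    by (simp add: matrix_add_ldistrib mm_add_rdistrib matrix_mul_assoc h2')
  have "(Dai + U ** Ci ** ?T) ** (Da + Da ** U ** Pi ** ?T ** Da)
      = mat 1 + (U ** Pi ** ?T ** Da + U ** Ci ** ?T ** Da + U ** Ci ** ?T ** Da ** U ** Pi ** ?T ** Da)"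
    by (simp add: matrix_add_ldistrib mm_add_rdistrib matrix_mul_assoc h1 algebra_simps)
  then show ?thesis using z e by simp
qed

lemma partial_eq:
  assumes "\<And>j. unS z $ j > (0::real)"
  shows "partial (elbo_joint Y x off Om) c z = D1 Y x off Om z (axis c 1)"
  unfolding partial_def by (rule DERIV_imp_deriv[OF D1_deriv[OF assms]])

lemma unS_axis: "unS (axis c 1 :: real^(('p::finite \<times> 'm::finite) + ('p + 'p))) $ j = (if c = Inr (Inr j) then 1 else 0)"
  by (auto simp: unS_def axis_def)
lemma unM_axis: "unM (axis c 1 :: real^(('p::finite \<times> 'm::finite) + ('p + 'p))) $ j = (if c = Inr (Inl j) then 1 else 0)"
  by (auto simp: unM_def axis_def)
lemma unB_axis: "unB (axis c 1 :: real^(('p::finite \<times> 'm::finite) + ('p + 'p))) $ k $ j = (if c = Inl (j, k) then 1 else 0)"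
  by (auto simp: unB_def axis_def)

lemma hess_eq:
  assumes pos: "\<And>j. unS z $ j > (0::real)"
  shows "hessian (elbo_joint Y x off Om) z $ c $ c' = D2 x off Om z (axis c 1) (axis c' 1)"
proof -
  define d where "d = Min (range (\<lambda>j. unS z $ j))"
  have d0: "d > 0" unfolding d_def using pos by (subst Min_gr_iff) auto
  have dle: "\<And>j. d \<le> unS z $ j" unfolding d_def by (rule Min_le) auto
  have "((\<lambda>t. partial (elbo_joint Y x off Om) c' (z + t *\<^sub>R axis c 1)) has_real_derivative
          D2 x off Om z (axis c 1) (axis c' 1)) (at 0 within UNIV)"
  proof (rule has_field_derivative_transform_within[OF _ d0])
    show "((\<lambda>t. D1 Y x off Om (z + t *\<^sub>R axis c 1) (axis c' 1)) has_real_derivative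
          D2 x off Om z (axis c 1) (axis c' 1)) (at 0 within UNIV)"
      using D2_deriv[OF pos] by simp
    fix t :: real assume "dist t 0 < d"
    then have t: "\<bar>t\<bar> < d" by simp
    have "\<And>j. unS (z + t *\<^sub>R axis c 1) $ j > 0"
    proof -
      fix j
      have "unS (z + t *\<^sub>R axis c 1) $ j = unS z $ j + t * (if c = Inr (Inr j) then 1 else 0)"
        by (simp add: unS_add_scale unS_axis)
      moreover have "unS z $ j + t * (if c = Inr (Inr j) then 1 else 0) > 0"
        using t dle[of j] d0 by auto
      ultimately show "unS (z + t *\<^sub>R axis c 1) $ j > 0" by simp
    qed
    then show "D1 Y x off Om (z + t *\<^sub>R axis c 1) (axis c' 1) =
               partial (elbo_joint Y x off Om) c' (z + t *\<^sub>R axis c 1)"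
      by (simp add: partial_eq)
  qed simp
  then show ?thesis
    unfolding hessian_def by (simp add: partial_def[of "partial _ _"] DERIV_imp_deriv)
qed


definition Umat :: "real^'p::finite \<Rightarrow> real^('p+'p)^'p" where
  "Umat s = (\<chi> j v. case v of Inl i \<Rightarrow> if i = j then 1 else 0 | Inr i \<Rightarrow> if i = j then s$j else 0)"
definition Cmat :: "real^'p::finite^'p \<Rightarrow> real^'p \<Rightarrow> real^('p+'p)^('p+'p)" where
  "Cmat Om F = (\<chi> v w. case v of Inl i \<Rightarrow> (case w of Inl j \<Rightarrow> Om$i$j | Inr j \<Rightarrow> 0)
                  | Inr i \<Rightarrow> (case w of Inl j \<Rightarrow> 0 | Inr j \<Rightarrow> if i = j then F$i else 0))"

lemma unB_joint: "unB (joint B mu s) = B" by (simp add: unB_def joint_def vec_eq_iff)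
lemma unM_joint: "unM (joint B mu s) = mu" by (simp add: unM_def joint_def vec_eq_iff)
lemma unS_joint: "unS (joint B mu s) = s" by (simp add: unS_def joint_def vec_eq_iff)

lemma sum_UNIV_sum: "sum f (UNIV :: ('a::finite + 'b::finite) set) = sum (\<lambda>i. f (Inl i)) UNIV + sum (\<lambda>i. f (Inr i)) UNIV"
  using sum.Plus[of "UNIV::'a set" "UNIV::'b set" f] by (simp add: comp_def)

lemma if_one_mult: "(if P then 1 else 0) * (y::real) = (if P then y else 0)" by simp
lemma mult_if_one: "(y::real) * (if P then 1 else 0) = (if P then y else 0)" by simp
lemma unM_axis_Inl: "unM (axis (Inl u) 1 :: real^(('p::finite \<times> 'm::finite) + ('p + 'p))) = 0"
  by (simp add: vec_eq_iff unM_axis)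
lemma unM_axis_InrInr: "unM (axis (Inr (Inr j)) 1 :: real^(('p::finite \<times> 'm::finite) + ('p + 'p))) = 0"
  by (simp add: vec_eq_iff unM_axis)
lemma unM_axis_InrInl: "unM (axis (Inr (Inl j)) 1 :: real^(('p::finite \<times> 'm::finite) + ('p + 'p))) = axis j 1"
  by (simp add: vec_eq_iff unM_axis axis_def unM_def)
lemma ax_quad: fixes Om :: "real^'p::finite^'p" shows "axis i 1 \<bullet> (Om *v axis j 1) = Om$i$j"
  by (simp add: inner_vec_def matrix_vector_mult_def axis_def if_one_mult mult_if_one)
lemma sum_if_conj: "(\<Sum>k\<in>(UNIV::'a::finite set). if P \<and> b = k then (f k::real) else 0) = (if P then f b else 0)"
  by (cases P) (simp_all add: sum.delta sum.delta')
lemma mult_if_zero: "(y::real) * (if P then z else 0) = (if P then y * z else 0)" by simp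
lemma if_zero_div: "(if P then z else 0) / (y::real) = (if P then z / y else 0)" by simp
lemma if_zero_mult: "(if P then z else 0) * (y::real) = (if P then z * y else 0)" by simp
lemma axis_comp: "axis (a::'n::finite) (1::real) $ j = (if a = j then 1 else 0)"
  by (simp add: axis_def)
lemmas axsimps = axis_comp unM_axis_Inl unM_axis_InrInr unM_axis_InrInl ax_quad sum_if_conj unB_axis unS_axis unM_axis

lemma blockBB:
  fixes Y :: "nat^'p::finite" and x :: "real^'m::finite"
  assumes pos: "\<And>j. s $ j > (0::real)"
  shows "hBB (hessian (elbo_joint Y x off Om) (joint B mu s)) = - kron (Diag (atil x off B mu s)) (\<chi> k l. x $ k * x $ l)"
proof -
  have p: "\<And>j. unS (joint B mu s) $ j > 0" using pos by (simp add: unS_joint)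
  show ?thesis
    apply (simp add: vec_eq_iff hBB_def hess_eq[OF p] kron_def Diag_def)
    apply (simp add: D2_def unB_joint unM_joint unS_joint axsimps if_one_mult mult_if_one mult_if_zero if_zero_mult sum.delta sum.delta')
    done
qed


lemma Diag_mult_left: "Diag u ** A = (\<chi> i j. u$i * A$i$j)"
  by (simp add: vec_eq_iff matrix_matrix_mult_def Diag_def if_zero_mult sum.delta)
lemma Diag_mult_right: "A ** Diag u = (\<chi> i j. A$i$j * u$j)"
  by (simp add: vec_eq_iff matrix_matrix_mult_def Diag_def mult_if_zero sum.delta')

lemma blockBP:
  fixes Y :: "nat^'p::finite" and x :: "real^'m::finite"
  assumes pos: "\<And>j. s $ j > (0::real)"
  shows "hBP (hessian (elbo_joint Y x off Om) (joint B mu s)) =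
     (\<chi> u v. - (x $ snd u * (Diag (atil x off B mu s) ** Umat s) $ fst u $ v))"
proof -
  have p: "\<And>j. unS (joint B mu s) $ j > 0" using pos by (simp add: unS_joint)
  show ?thesis
    apply (simp add: vec_eq_iff hBP_def hess_eq[OF p] Diag_mult_left, intro allI)
    subgoal for j k v
      apply (cases v)
      apply (simp_all add: D2_def unB_joint unM_joint unS_joint axsimps Umat_def if_one_mult mult_if_one mult_if_zero if_zero_mult sum.delta sum.delta' if_zero_div)
      done
    done
qed


lemma blockPB:
  fixes Y :: "nat^'p::finite" and x :: "real^'m::finite"
  assumes pos: "\<And>j. s $ j > (0::real)"
  shows "hPB (hessian (elbo_joint Y x off Om) (joint B mu s)) =
     (\<chi> v u. - (x $ snd u * (Diag (atil x off B mu s) ** Umat s) $ fst u $ v))"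
proof -
  have p: "\<And>j. unS (joint B mu s) $ j > 0" using pos by (simp add: unS_joint)
  show ?thesis
    apply (simp add: vec_eq_iff hPB_def hess_eq[OF p] Diag_mult_left, intro allI)
    subgoal for v j k
      apply (cases v)
      apply (simp_all add: D2_def unB_joint unM_joint unS_joint axsimps Umat_def if_one_mult mult_if_one mult_if_zero if_zero_mult sum.delta sum.delta' if_zero_div)
      done
    done
qed

lemma blockPP:
  fixes Y :: "nat^'p::finite" and x :: "real^'m::finite"
  assumes pos: "\<And>j. s $ j > (0::real)" and sym: "\<And>i j. Om $ i $ j = Om $ j $ i"
  shows "hPP (hessian (elbo_joint Y x off Om) (joint B mu s)) =
     - (Cmat Om (\<chi> j. atil x off B mu s $ j + Om $ j $ j + 1 / (s $ j)^2)
        + transpose (Umat s) ** Diag (atil x off B mu s) ** Umat s)"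
proof -
  have p: "\<And>j. unS (joint B mu s) $ j > 0" using pos by (simp add: unS_joint)
  show ?thesis
    apply (simp add: vec_eq_iff hPP_def hess_eq[OF p] Diag_mult_right, intro allI)
    subgoal for v w
      apply (cases v; cases w)
      apply (simp_all add: D2_def unB_joint unM_joint unS_joint axsimps Umat_def Cmat_def transpose_def matrix_matrix_mult_def if_one_mult mult_if_one mult_if_zero if_zero_mult sum.delta sum.delta' if_zero_div sym)
      done
    done
qed


lemma pd_inv:
  fixes A :: "real^'n^'n"
  assumes "\<And>v. v \<noteq> 0 \<Longrightarrow> v \<bullet> (A *v v) > 0"
  shows "\<exists>B. A ** B = mat 1"
proof -
  have "\<forall>x. A *v x = 0 \<longrightarrow> x = 0"
    using assms by (metis inner_zero_right less_irrefl)
  then obtain B where "B ** A = mat 1" using matrix_left_invertible_ker(1) by blast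
  then show ?thesis using matrix_left_right_inverse by blast
qed

lemma inner_transpose: fixes U :: "real^'q^'p"
  shows "v \<bullet> (transpose U *v w) = (U *v v) \<bullet> w"
  apply (simp add: inner_vec_def matrix_vector_mult_def transpose_def sum_distrib_left sum_distrib_right mult_ac)
  apply (subst sum.swap) apply simp
  done

lemma Diag_mult_vec: "Diag u *v w = (\<chi> j. u$j * w$j)"
  by (simp add: vec_eq_iff matrix_vector_mult_def Diag_def if_zero_mult sum.delta)

lemma Diag_Diag: "Diag u ** Diag v = Diag (\<chi> j. u$j * v$j)"
  unfolding Diag_mult_left by (simp add: vec_eq_iff Diag_def)

lemma Diag_inv: assumes "\<And>j. g $ j \<noteq> (0::real)"
  shows "matrix_inv (Diag g) = Diag (\<chi> j. 1 / g$j)"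
  by (rule inv_unique) (unfold Diag_Diag, simp add: assms mat_def Diag_def vec_eq_iff)

lemma Diag_transpose: "transpose (Diag u) = Diag u"
  by (simp add: transpose_def Diag_def vec_eq_iff)

lemma Cmat_quad:
  fixes Om :: "real^'p::finite^'p"
  shows "v \<bullet> (Cmat Om F *v v) = (\<chi> j. v $ Inl j) \<bullet> (Om *v (\<chi> j. v $ Inl j)) + (\<Sum>j\<in>UNIV. F$j * (v $ Inr j)^2)"
  by (simp add: inner_vec_def matrix_vector_mult_def Cmat_def sum_UNIV_sum if_zero_mult mult_if_zero sum.delta sum.delta' power2_eq_square mult_ac)

lemma N_pd:
  fixes Om :: "real^'p::finite^'p" and U :: "real^('p+'p)^'p"
  assumes Opd: "\<And>v. v \<noteq> 0 \<Longrightarrow> v \<bullet> (Om *v v) > 0"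
    and Fpos: "\<And>j. F $ j > 0" and apos: "\<And>j. a $ j > 0" and v0: "v \<noteq> 0"
  shows "v \<bullet> ((Cmat Om F + transpose U ** Diag a ** U) *v v) > 0"
proof -
  let ?vL = "(\<chi> j. v $ Inl j) :: real^'p"
  have e: "v \<bullet> ((Cmat Om F + transpose U ** Diag a ** U) *v v)
     = ?vL \<bullet> (Om *v ?vL) + (\<Sum>j\<in>UNIV. F$j * (v $ Inr j)^2) + (\<Sum>j\<in>UNIV. a$j * ((U *v v)$j)^2)"
  proof -
    have "(Cmat Om F + transpose U ** Diag a ** U) *v v = Cmat Om F *v v + transpose U *v (Diag a *v (U *v v))"
      by (simp add: matrix_vector_mult_add_rdistrib matrix_vector_mul_assoc matrix_mul_assoc)
    then show ?thesis
      by (simp only: inner_add_right Cmat_quad inner_transpose Diag_mult_vec)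
        (simp add: inner_vec_def power2_eq_square mult_ac)
  qed
  have s1: "(\<Sum>j\<in>UNIV. F$j * (v $ Inr j)^2) \<ge> 0" by (intro sum_nonneg) (simp add: Fpos less_imp_le)
  have s2: "(\<Sum>j\<in>UNIV. a$j * ((U *v v)$j)^2) \<ge> 0" by (intro sum_nonneg) (simp add: apos less_imp_le)
  show ?thesis
  proof (cases "?vL = 0")
    case False
    then show ?thesis using Opd[OF False] s1 s2 e by linarith
  next
    case True
    have "\<exists>i. v $ Inr i \<noteq> 0"
    proof (rule ccontr)
      assume "\<not> ?thesis"
      then have "v = 0" using True by (simp add: vec_eq_iff) (metis sum.exhaust)
      then show False using v0 by simp
    qed
    then obtain i where i: "v $ Inr i \<noteq> 0" by blast
    have "0 < F$i * (v $ Inr i)^2" using Fpos[of i] i by simp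
    also have "\<dots> \<le> (\<Sum>j\<in>UNIV. F$j * (v $ Inr j)^2)"
      by (rule member_le_sum) (auto simp: Fpos less_imp_le)
    finally show ?thesis using True s2 e by simp
  qed
qed


lemma Cmat_inv:
  fixes Sig Om :: "real^'p::finite^'p"
  assumes SO: "Sig ** Om = mat 1" and Fnz: "\<And>j. F$j \<noteq> 0"
  shows "Cmat Sig (\<chi> j. 1 / F$j) ** Cmat Om F = mat 1"
proof -
  have hSO: "(\<Sum>k\<in>UNIV. Sig$i$k * Om$k$j) = (if i = j then 1 else 0)" for i j
    using arg_cong[OF SO, of "\<lambda>M. M$i$j"] by (simp add: matrix_matrix_mult_def mat_def)
  show ?thesis
    apply (simp add: vec_eq_iff, intro allI)
    subgoal for v w
      by (cases v; cases w) (simp_all add: matrix_matrix_mult_def Cmat_def sum_UNIV_sum mat_def hSO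
          if_zero_mult mult_if_zero sum.delta sum.delta' Fnz)
    done
qed

lemma UCU:
  fixes Sig :: "real^'p::finite^'p"
  shows "Umat s ** Cmat Sig G ** transpose (Umat s) = Sig + Diag (\<chi> j. (s$j)^2 * G$j)"
  by (simp add: vec_eq_iff matrix_matrix_mult_def Umat_def Cmat_def transpose_def sum_UNIV_sum Diag_def
          if_zero_mult mult_if_zero if_one_mult mult_if_one sum.delta sum.delta' power2_eq_square)

lemma kron_prod:
  fixes W :: "real^'q::finite^'p::finite" and Q :: "real^'q^'q" and x :: "real^'m::finite"
  shows "(\<chi> u v. - (x $ snd u * W $ fst u $ v)) ** Q ** (\<chi> v u. - (x $ snd u * W $ fst u $ v))
         = kron (W ** Q ** transpose W) (\<chi> k l. x$k * x$l)"
  by (simp add: vec_eq_iff matrix_matrix_mult_def kron_def transpose_def sum_distrib_left sum_distrib_right mult_ac)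

lemma M_simp:
  fixes Om :: "real^'p::finite^'p"
  shows "mat 1 + Diag (\<chi> j. (s $ j)^2) ** (Diag a + diag_part Om) = Diag (\<chi> j. 1 + (s$j)^2 * (a$j + Om$j$j))"
  unfolding Diag_mult_left by (simp add: vec_eq_iff Diag_def diag_part_def mat_def)


lemma kron_add: "kron (A + B) C = kron A C + kron B C"
  by (simp add: vec_eq_iff kron_def distrib_right)

theorem proposition10:
  fixes Y :: "nat^'p::finite" and x :: "real^'m::finite" and off :: "real^'p"
    and B :: "real^'p^'m" and Om :: "real^'p^'p" and mu s :: "real^'p"
  assumes "transpose Om = Om"
    and "\<And>v. v \<noteq> 0 \<Longrightarrow> v \<bullet> (Om *v v) > 0"
    and "\<And>j. s $ j > 0"
  shows
    "(let H = hessian (elbo_joint Y x off Om) (joint B mu s);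
          Sigma = matrix_inv Om;
          a = atil x off B mu s
      in hBB H - hBP H ** matrix_inv (hPP H) ** hPB H
         = - kron (matrix_inv (Sigma + matrix_inv (Diag a)
                    + Diag (\<chi> j. (s $ j)^4)
                      ** matrix_inv (mat 1 + Diag (\<chi> j. (s $ j)^2) ** (Diag a + diag_part Om))))
                  (\<chi> k l. x $ k * x $ l))"
proof -
  define a where "a = atil x off B mu s"
  define H where "H = hessian (elbo_joint Y x off Om) (joint B mu s)"
  define Sig where "Sig = matrix_inv Om"
  have spos: "\<And>j. s $ j > 0" by (rule assms(3))
  have sym: "Om$i$j = Om$j$i" for i j
    using arg_cong[OF assms(1), of "\<lambda>M. M$i$j"] by (simp add: transpose_def)
  obtain Oi where OOi: "Om ** Oi = mat 1" using pd_inv[OF assms(2)] by blast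
  have OSig: "Om ** Sig = mat 1" using inv_unique[OF OOi] OOi by (simp add: Sig_def)
  have SigO: "Sig ** Om = mat 1" using OSig matrix_left_right_inverse by blast
  have Ojj: "Om$j$j > 0" for j
  proof -
    have "axis j (1::real) \<noteq> 0" by (simp add: vec_eq_iff axis_def)
    from assms(2)[OF this] show ?thesis by (simp add: ax_quad)
  qed
  have apos: "a$j > 0" for j by (simp add: a_def atil_def)
  define F where "F = (\<chi> j. a$j + Om$j$j + 1/(s$j)^2)"
  have Fpos: "F$j > 0" for j
  proof -
    have "1/(s$j)^2 > 0" using spos[of j] by simp
    moreover have "F$j = a$j + Om$j$j + 1/(s$j)^2" by (simp add: F_def)
    ultimately show ?thesis using apos[of j] Ojj[of j] by linarith
  qed
  define U where "U = Umat s"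
  define Da where "Da = Diag a"
  define N where "N = Cmat Om F + transpose U ** Da ** U"
  have hPP: "hPP H = - N"
    unfolding H_def N_def U_def Da_def F_def a_def by (rule blockPP[OF spos sym])
  have hBB: "hBB H = - kron Da (\<chi> k l. x $ k * x $ l)"
    unfolding H_def Da_def a_def by (rule blockBB[OF spos])
  have hBP: "hBP H = (\<chi> u v. - (x $ snd u * (Da ** U) $ fst u $ v))"
    unfolding H_def Da_def a_def U_def by (rule blockBP[OF spos])
  have hPB: "hPB H = (\<chi> v u. - (x $ snd u * (Da ** U) $ fst u $ v))"
    unfolding H_def Da_def a_def U_def by (rule blockPB[OF spos])
  obtain Ni where NNi: "N ** Ni = mat 1"
    using pd_inv[of N] N_pd[OF assms(2) Fpos apos] unfolding N_def Da_def by blast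
  define Pi where "Pi = matrix_inv (hPP H)"
  have Pi: "Pi = - Ni" unfolding Pi_def hPP
    by (rule inv_unique) (simp add: mm_neg_left mm_neg_right NNi)
  have NPi: "(Cmat Om F + transpose U ** Da ** U) ** Pi = - mat 1"
    using NNi by (simp add: Pi mm_neg_right N_def[symmetric])
  define Ci where "Ci = Cmat Sig (\<chi> j. 1 / F$j)"
  have CiC: "Ci ** Cmat Om F = mat 1"
    unfolding Ci_def by (rule Cmat_inv[OF SigO]) (use Fpos in \<open>metis less_irrefl\<close>)
  define Dai where "Dai = Diag (\<chi> j. 1 / a$j)"
  have DaiDa: "Dai ** Da = mat 1"
    unfolding Dai_def Da_def Diag_Diag using apos
    by (simp add: vec_eq_iff Diag_def mat_def) (metis less_irrefl)
  have invDa: "matrix_inv (Diag a) = Dai"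
    unfolding Dai_def by (rule Diag_inv) (use apos in \<open>metis less_irrefl\<close>)
  define X where "X = Da + Da ** U ** Pi ** transpose U ** Da"
  have WB: "(Dai + U ** Ci ** transpose U) ** X = mat 1"
    unfolding X_def by (rule woodbury[OF DaiDa CiC NPi])
  have g0: "1 + (s$j)^2 * (a$j + Om$j$j) \<noteq> 0" for j
  proof -
    have "(s$j)^2 * (a$j + Om$j$j) \<ge> 0" using apos[of j] Ojj[of j] by simp
    then show ?thesis by linarith
  qed
  have Meq: "Sig + matrix_inv (Diag a) + Diag (\<chi> j. (s $ j)^4)
               ** matrix_inv (mat 1 + Diag (\<chi> j. (s $ j)^2) ** (Diag a + diag_part Om))
             = Dai + U ** Ci ** transpose U"
  proof -
    have "Diag (\<chi> j. (s $ j)^4) ** matrix_inv (mat 1 + Diag (\<chi> j. (s $ j)^2) ** (Diag a + diag_part Om))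
        = Diag (\<chi> j. (s$j)^2 * (\<chi> j. 1 / F$j) $ j)"
    proof -
      have "(s$j)^4 * (1 / (1 + (s$j)^2 * (a$j + Om$j$j))) = (s$j)^2 * (1 / F$j)" for j
        using spos[of j] g0[of j] Fpos[of j] unfolding F_def
        by (simp add: field_simps power2_eq_square) (simp add: power4_eq_xxxx algebra_simps)
      then show ?thesis
        unfolding M_simp by (subst Diag_inv) (use g0 in \<open>simp_all add: Diag_Diag\<close>)
    qed
    then show ?thesis unfolding U_def Ci_def UCU invDa by (simp add: algebra_simps)
  qed
  have invM: "matrix_inv (Dai + U ** Ci ** transpose U) = X" by (rule inv_unique[OF WB])
  have tr: "transpose (Da ** U) = transpose U ** Da"
    by (simp add: matrix_transpose_mul Da_def Diag_transpose)
  have "hBB H - hBP H ** Pi ** hPB H = - kron X (\<chi> k l. x $ k * x $ l)"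
    unfolding hBB hBP hPB kron_prod tr X_def kron_add
    by (simp add: matrix_mul_assoc)
  then show ?thesis
    unfolding Let_def H_def[symmetric] a_def[symmetric] Sig_def[symmetric] Pi_def[symmetric]
    using Meq invM by simp
qed

end
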